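(* Let $P(k)=C_pT_p^k-C_mT_m^k$ with $C_p,C_m>0$, $T_p,T_m\in(0,1)$, $T_p\neq T_m$. For each integer $j\ge 0$ the $j$-th derivative $P^{(j)}$ has a unique zero $k^{(j)}$ (the $j$-th characteristic point), and $k^{(0)}<k^{(1)}<k^{(2)}<\dots$, i.e. the abscissa intersection point, the extremum, the inflection point and then the zeros of higher derivatives are located from left to right in this order. *)

theory Defs
  imports "HOL-Analysis.Analysis"
begin

definition charP :: "real \<Rightarrow> real \<Rightarrow> real \<Rightarrow> real \<Rightarrow> real \<Rightarrow> real" where
  "charP Cp Tp Cm Tm k = Cp * Tp powr k - Cm * Tm powr k"

end

theory Submission
  imports Defs
begin

lemma derivs_charP:
  assumes "0 < Tp" "0 < Tm"
  shows "(deriv ^^ j) (charP Cp Tp Cm Tm) =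
         (\<lambda>k. Cp * ln Tp ^ j * exp (k * ln Tp) - Cm * ln Tm ^ j * exp (k * ln Tm))"
proof (induction j)
  case 0
  then show ?case using assms by (auto simp: charP_def powr_def)
next
  case (Suc j)
  have "\<And>k. ((\<lambda>k. Cp * ln Tp ^ j * exp (k * ln Tp) - Cm * ln Tm ^ j * exp (k * ln Tm))
      has_real_derivative (Cp * ln Tp ^ Suc j * exp (k * ln Tp) - Cm * ln Tm ^ Suc j * exp (k * ln Tm))) (at k)"
    by (auto intro!: derivative_eq_intros simp: algebra_simps)
  then show ?case using Suc by (auto simp: DERIV_imp_deriv)
qed

theorem corollary3:
  fixes Cp Cm Tp Tm :: real
  assumes "Cp > 0" and "Cm > 0"
    and "0 < Tp" and "Tp < 1" and "0 < Tm" and "Tm < 1"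
    and "Tp \<noteq> Tm"
  shows "\<exists>kk :: nat \<Rightarrow> real.
           (\<forall>j. ((deriv ^^ j) (charP Cp Tp Cm Tm) (kk j) = 0
                 \<and> (\<forall>x. (deriv ^^ j) (charP Cp Tp Cm Tm) x = 0 \<longrightarrow> x = kk j)))
           \<and> strict_mono kk"
proof -
  define a where "a = ln Tp"
  define b where "b = ln Tm"
  have a0: "a < 0" and b0: "b < 0" using assms by (auto simp: a_def b_def)
  have ab: "a \<noteq> b" using assms by (auto simp: a_def b_def)
  define kk where "kk j = (ln Cm - ln Cp + real j * (ln \<bar>b\<bar> - ln \<bar>a\<bar>)) / (a - b)" for j :: nat
  have key: "(deriv ^^ j) (charP Cp Tp Cm Tm) x = 0 \<longleftrightarrow> x = kk j" for j x
  proof -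
    have pa: "a ^ j = (-1) ^ j * \<bar>a\<bar> ^ j" using a0
      by (metis abs_of_neg minus_minus mult_minus1 power_mult_distrib)
    have pb: "b ^ j = (-1) ^ j * \<bar>b\<bar> ^ j" using b0
      by (metis abs_of_neg minus_minus mult_minus1 power_mult_distrib)
    have "(deriv ^^ j) (charP Cp Tp Cm Tm) x = 0 \<longleftrightarrow>
          Cp * a ^ j * exp (x * a) = Cm * b ^ j * exp (x * b)"
      using assms by (simp add: derivs_charP a_def b_def)
    also have "\<dots> \<longleftrightarrow> (-1)^j * (Cp * \<bar>a\<bar> ^ j * exp (x * a)) = (-1)^j * (Cm * \<bar>b\<bar> ^ j * exp (x * b))"
      by (simp add: pa pb mult_ac)
    also have "\<dots> \<longleftrightarrow> Cp * \<bar>a\<bar> ^ j * exp (x * a) = Cm * \<bar>b\<bar> ^ j * exp (x * b)"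
      by simp
    also have "\<dots> \<longleftrightarrow> ln (Cp * \<bar>a\<bar> ^ j * exp (x * a)) = ln (Cm * \<bar>b\<bar> ^ j * exp (x * b))"
      using assms a0 b0 by (intro ln_inj_iff[symmetric]) auto
    also have "\<dots> \<longleftrightarrow> ln Cp + real j * ln \<bar>a\<bar> + x * a = ln Cm + real j * ln \<bar>b\<bar> + x * b"
      using assms a0 b0 by (simp add: ln_mult ln_realpow)
    also have "\<dots> \<longleftrightarrow> x * (a - b) = ln Cm - ln Cp + real j * (ln \<bar>b\<bar> - ln \<bar>a\<bar>)"
      by (auto simp: algebra_simps)
    also have "\<dots> \<longleftrightarrow> x = kk j"
      using ab by (auto simp: kk_def field_simps)
    finally show ?thesis .
  qed
  have pos: "(ln \<bar>b\<bar> - ln \<bar>a\<bar>) / (a - b) > 0"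
  proof (cases "a < b")
    case True
    then have "\<bar>b\<bar> < \<bar>a\<bar>" using a0 b0 by auto
    then have "ln \<bar>b\<bar> < ln \<bar>a\<bar>" using b0 by simp
    then show ?thesis using True by (simp add: divide_neg_neg)
  next
    case False
    then have "b < a" using ab by auto
    then have "\<bar>a\<bar> < \<bar>b\<bar>" using a0 b0 by auto
    then have "ln \<bar>a\<bar> < ln \<bar>b\<bar>" using a0 by simp
    then show ?thesis using \<open>b < a\<close> by simp
  qed
  have "strict_mono kk"
  proof (rule strict_monoI)
    fix m n :: nat assume "m < n"
    have "kk n - kk m = real (n - m) * ((ln \<bar>b\<bar> - ln \<bar>a\<bar>) / (a - b))"
    proof -
      have "a - b \<noteq> 0" using ab by simp
      then show ?thesis using \<open>m < n\<close>
        unfolding kk_def by (simp add: of_nat_diff diff_divide_distrib[symmetric] algebra_simps)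
    qed
    also have "\<dots> > 0" using pos \<open>m < n\<close> by (intro mult_pos_pos) auto
    finally show "kk m < kk n" by simp
  qed
  then show ?thesis using key by blast
qed

end
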